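(* Let $(x^J_{i,k})$ be generated by the interleaved consensus and projected gradient descent iteration described in the context, under the standing assumptions, with SLC constant $M>0$ and BUC constant $\bar M>0$, and with each $B_k$ a nonnegative doubly stochastic matrix. Then for every $y\in\mathcal{X}$ and every $k\ge 0$, $$\eta_{k+1}^2 \le (1+\gamma_k)\,\eta_k^2 - 2\alpha_k M\big(f(\bar{x}_{0,k})-f(y)\big) + \alpha_k^2\,(C_1^2+C_2^2+C_3^2) + \alpha_k C_4 \max_{J}\|\delta^J_k\|,$$ where $\eta_k^2=\sum_{J=1}^S\|x^J_{0,k}-y\|^2$, $\gamma_k=\frac{1}{S}\big(2\alpha_k^2\bar M^2\,\mathbf{N}\,\mathbf{L}+\alpha_k\bar M\,\mathbf{N}\max_J\|\delta^J_k\|\big)$, $C_1^2=\sum_{i=1}^{\Delta}\sum_{J=1}^S\big(\sum_{h=1}^C|W_{i-1,k}[J,h]|\,L_h\big)^2$, $C_2^2=4(\bar M\mathbf{L})^2$, $C_3^2=2\bar M^2\mathbf{N}\mathbf{L}$, and $C_4=\bar M(2\mathbf{L}+\mathbf{N})$.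
   Context: Standing setup. Integers $S\ge1$ (servers), $C\ge1$ (clients), $D\ge1$, $\Delta\ge1$. $\mathcal{X}\subseteq\mathbb{R}^D$ is a nonempty convex compact set and $\mathcal{P}_{\mathcal{X}}$ is Euclidean projection onto $\mathcal{X}$. For $h=1,\dots,C$, $f_h:\mathbb{R}^D\to\mathbb{R}$ is continuously differentiable and convex with gradient $g_h$; there are constants $L_h$ with $\|g_h(x)\|\le L_h$ for all $x\in\mathcal{X}$ and constants $N_h>0$ with $\|g_h(x)-g_h(y)\|\le N_h\|x-y\|$ for all $x,y\in\mathcal{X}$. Set $\mathbf{L}=\sum_h L_h$, $\mathbf{N}=\sum_h N_h$, $f=\sum_{h=1}^C f_h$, $f^*=\min_{x\in\mathcal{X}}f(x)$, $\mathcal{X}^*=\{x\in\mathcal{X}: f(x)=f^*\}$, $\mathrm{dist}(x,\mathcal{X}^* )=\inf_{x^*\in\mathcal{X}^*}\|x-x^*\|$. Norms are Euclidean. Step sizes $\alpha_k>0$. Weight matrices $W_{i,k}\in\mathbb{R}^{S\times C}$ ($0\le i\le\Delta-1$, $k\ge0$), entries possibly negative. Symmetric Learning Condition (SLC): there is $M>0$ with $\sum_{i=1}^{\Delta}\sum_{J=1}^S W_{i-1,k}[J,h]=M$ for all $k\ge0$ and all $h$. Bounded Update Condition (BUC): there is $\bar M>0$ with $\sum_{i=1}^{\Delta}\sum_{J=1}^S |W_{i-1,k}[J,h]|\le\bar M$ for all $k,h$. Consensus matrices $B_k\in\mathbb{R}^{S\times S}$ have nonnegative entries. Iteration: given $x^J_{0,0}\in\mathcal{X}$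 ($J=1,\dots,S$), for each $k\ge0$ and $i=1,\dots,\Delta$, $x^J_{i,k}=\mathcal{P}_{\mathcal{X}}\big[x^J_{i-1,k}-\alpha_k\sum_{h=1}^C W_{i-1,k}[J,h]\,g_h(x^J_{i-1,k})\big]$, and then $x^I_{0,k+1}=\sum_{J=1}^S B_k[I,J]\,x^J_{\Delta,k}$. Averages: $\bar x_{i,k}=\frac1S\sum_{J=1}^S x^J_{i,k}$; disagreements: $\delta^J_k=x^J_{0,k}-\bar x_{0,k}$. *)

theory Defs
  imports "HOL-Analysis.Analysis"
begin

end

theory Submission
  imports Defs
begin


lemma sqnorm_convex: "convex_on UNIV (\<lambda>v::'a::real_normed_vector. (norm v)\<^sup>2)"
proof (rule convex_onI)
  fix t :: real and a b :: 'a
  assume t: "0 < t" "t < 1"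
  have "norm ((1 - t) *\<^sub>R a + t *\<^sub>R b) \<le> (1-t) * norm a + t * norm b"
    using t by (smt (verit) norm_scaleR norm_triangle_ineq)
  hence "(norm ((1 - t) *\<^sub>R a + t *\<^sub>R b))\<^sup>2 \<le> ((1-t) * norm a + t * norm b)\<^sup>2"
    by (simp add: power_mono)
  also have "\<dots> \<le> (1-t) * (norm a)\<^sup>2 + t * (norm b)\<^sup>2"
  proof -
    have "(1-t) * (norm a)\<^sup>2 + t * (norm b)\<^sup>2 - ((1-t) * norm a + t * norm b)\<^sup>2 = t*(1-t)*(norm a - norm b)\<^sup>2"
      by (simp add: power2_eq_square algebra_simps)
    moreover have "t*(1-t)*(norm a - norm b)\<^sup>2 \<ge> 0" using t by simp
    ultimately show ?thesis by linarith
  qed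
  finally show "(norm ((1 - t) *\<^sub>R a + t *\<^sub>R b))\<^sup>2 \<le> (1-t) * (norm a)\<^sup>2 + t * (norm b)\<^sup>2" .
qed simp

lemma sqnorm_jensen:
  fixes v :: "nat \<Rightarrow> 'a::real_normed_vector"
  assumes "finite A" "A \<noteq> {}" "\<And>i. i \<in> A \<Longrightarrow> a i \<ge> 0" "sum a A = 1"
  shows "(norm (\<Sum>i\<in>A. a i *\<^sub>R v i))\<^sup>2 \<le> (\<Sum>i\<in>A. a i * (norm (v i))\<^sup>2)"
  using convex_on_sum[OF assms(1,2) sqnorm_convex assms(4) assms(3), of v] by simp

lemma grad_ineq:
  fixes f :: "'a::real_inner \<Rightarrow> real"
  assumes cf: "convex_on UNIV f" and df: "\<And>z. (f has_derivative (\<lambda>v. G z \<bullet> v)) (at z)"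
  shows "G x \<bullet> (y - x) \<le> f y - f x"
proof -
  define d where "d = y - x"
  define \<phi> where "\<phi> = (\<lambda>t::real. f (x + t *\<^sub>R d))"
  have cphi: "convex_on UNIV \<phi>"
  proof (rule convex_onI)
    fix t s u :: real assume t: "0 < t" "t < 1"
    have "x + ((1 - t) * s + t * u) *\<^sub>R d = (1 - t) *\<^sub>R (x + s *\<^sub>R d) + t *\<^sub>R (x + u *\<^sub>R d)"
      by (simp add: algebra_simps)
    then show "\<phi> ((1 - t) *\<^sub>R s + t *\<^sub>R u) \<le> (1 - t) * \<phi> s + t * \<phi> u"
      unfolding \<phi>_def using convex_onD[OF cf, of t "x + s *\<^sub>R d" "x + u *\<^sub>R d"] t by simp
  qed simp
  have "((\<lambda>t::real. x + t *\<^sub>R d) has_derivative (\<lambda>t. t *\<^sub>R d)) (at 0)"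
    by (auto intro!: derivative_eq_intros)
  from has_derivative_compose[OF this, of f "\<lambda>v. G x \<bullet> v"] df[of x]
  have "(\<phi> has_derivative (\<lambda>t. G x \<bullet> (t *\<^sub>R d))) (at 0)"
    unfolding \<phi>_def by simp
  hence "(\<phi> has_field_derivative (G x \<bullet> d)) (at 0 within UNIV)"
    unfolding has_field_derivative_def by (simp add: mult.commute[of _ "G x \<bullet> d"])
  from convex_on_imp_above_tangent[OF cphi _ _ _ this]
  have "\<And>s. G x \<bullet> d * s \<le> \<phi> s - \<phi> 0" by simp
  from this[of 1] show ?thesis unfolding \<phi>_def d_def by simp
qed


lemma norm_diff_sq_expand:
  fixes u v :: "'a::real_inner"
  shows "(norm (u - a *\<^sub>R v))\<^sup>2 = (norm u)\<^sup>2 - 2 * a * (v \<bullet> u) + a\<^sup>2 * (norm v)\<^sup>2"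
  unfolding power2_norm_eq_inner
  by (simp add: inner_diff_left inner_diff_right inner_commute algebra_simps power2_eq_square)

theorem lemma3:
  fixes S C \<Delta> :: nat
    and X :: "'a::euclidean_space set"
    and f :: "nat \<Rightarrow> 'a \<Rightarrow> real"
    and g :: "nat \<Rightarrow> 'a \<Rightarrow> 'a"
    and L N :: "nat \<Rightarrow> real"
    and \<alpha> :: "nat \<Rightarrow> real"
    and W :: "nat \<Rightarrow> nat \<Rightarrow> nat \<Rightarrow> nat \<Rightarrow> real"
    and B :: "nat \<Rightarrow> nat \<Rightarrow> nat \<Rightarrow> real"
    and M Mbar :: real
    and x :: "nat \<Rightarrow> nat \<Rightarrow> nat \<Rightarrow> 'a"
    and y :: 'a
    and k :: nat
  assumes S_pos: "S \<ge> 1" and C_pos: "C \<ge> 1" and Delta_pos: "\<Delta> \<ge> 1"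
    and X_ne: "X \<noteq> {}" and X_convex: "convex X" and X_compact: "compact X"
    and f_deriv: "\<And>h z. h \<in> {1..C} \<Longrightarrow> (f h has_derivative (\<lambda>v. g h z \<bullet> v)) (at z)"
    and g_cont: "\<And>h. h \<in> {1..C} \<Longrightarrow> continuous_on UNIV (g h)"
    and f_convex: "\<And>h. h \<in> {1..C} \<Longrightarrow> convex_on UNIV (f h)"
    and g_bound: "\<And>h z. h \<in> {1..C} \<Longrightarrow> z \<in> X \<Longrightarrow> norm (g h z) \<le> L h"
    and N_pos: "\<And>h. h \<in> {1..C} \<Longrightarrow> N h > 0"
    and g_lip: "\<And>h z w. h \<in> {1..C} \<Longrightarrow> z \<in> X \<Longrightarrow> w \<in> X \<Longrightarrow>
                  norm (g h z - g h w) \<le> N h * norm (z - w)"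
    and alpha_pos: "\<And>k. \<alpha> k > 0"
    and M_pos: "M > 0"
    and SLC: "\<And>k h. h \<in> {1..C} \<Longrightarrow>
                (\<Sum>i\<in>{1..\<Delta>}. \<Sum>J\<in>{1..S}. W (i - 1) k J h) = M"
    and Mbar_pos: "Mbar > 0"
    and BUC: "\<And>k h. h \<in> {1..C} \<Longrightarrow>
                (\<Sum>i\<in>{1..\<Delta>}. \<Sum>J\<in>{1..S}. \<bar>W (i - 1) k J h\<bar>) \<le> Mbar"
    and B_nonneg: "\<And>k I J. I \<in> {1..S} \<Longrightarrow> J \<in> {1..S} \<Longrightarrow> B k I J \<ge> 0"
    and B_rows: "\<And>k I. I \<in> {1..S} \<Longrightarrow> (\<Sum>J\<in>{1..S}. B k I J) = 1"
    and B_cols: "\<And>k J. J \<in> {1..S} \<Longrightarrow> (\<Sum>I\<in>{1..S}. B k I J) = 1"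
    and x_init: "\<And>J. J \<in> {1..S} \<Longrightarrow> x J 0 0 \<in> X"
    and x_step: "\<And>J i k. J \<in> {1..S} \<Longrightarrow> i \<in> {1..\<Delta>} \<Longrightarrow>
                  x J i k = closest_point X (x J (i - 1) k -
                    \<alpha> k *\<^sub>R (\<Sum>h\<in>{1..C}. W (i - 1) k J h *\<^sub>R g h (x J (i - 1) k)))"
    and x_cons: "\<And>I k. I \<in> {1..S} \<Longrightarrow>
                  x I 0 (Suc k) = (\<Sum>J\<in>{1..S}. B k I J *\<^sub>R x J \<Delta> k)"
    and y_in: "y \<in> X"
  shows
    "let Lsum = (\<Sum>h\<in>{1..C}. L h);
         Nsum = (\<Sum>h\<in>{1..C}. N h);
         F = (\<lambda>z. \<Sum>h\<in>{1..C}. f h z);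
         xbar = (\<lambda>k. (1 / real S) *\<^sub>R (\<Sum>J\<in>{1..S}. x J 0 k));
         \<eta>sq = (\<lambda>k. \<Sum>J\<in>{1..S}. (norm (x J 0 k - y))\<^sup>2);
         dmax = Max ((\<lambda>J. norm (x J 0 k - xbar k)) ` {1..S});
         \<gamma> = (1 / real S) * (2 * (\<alpha> k)\<^sup>2 * Mbar\<^sup>2 * Nsum * Lsum + \<alpha> k * Mbar * Nsum * dmax);
         C1sq = (\<Sum>i\<in>{1..\<Delta>}. \<Sum>J\<in>{1..S}. (\<Sum>h\<in>{1..C}. \<bar>W (i - 1) k J h\<bar> * L h)\<^sup>2);
         C2sq = 4 * (Mbar * Lsum)\<^sup>2;
         C3sq = 2 * Mbar\<^sup>2 * Nsum * Lsum;
         C4 = Mbar * (2 * Lsum + Nsum)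
     in \<eta>sq (Suc k) \<le> (1 + \<gamma>) * \<eta>sq k - 2 * \<alpha> k * M * (F (xbar k) - F y)
          + (\<alpha> k)\<^sup>2 * (C1sq + C2sq + C3sq) + \<alpha> k * C4 * dmax"
  proof -
  have Xc: "closed X" using X_compact by (simp add: compact_imp_closed)
  define a where "a = \<alpha> k"
  have a_pos: "a > 0" using alpha_pos a_def by simp
  define Lsum where "Lsum = (\<Sum>h\<in>{1..C}. L h)"
  define Nsum where "Nsum = (\<Sum>h\<in>{1..C}. N h)"
  define F where "F = (\<lambda>z. \<Sum>h\<in>{1..C}. f h z)"
  define xbar where "xbar = (\<lambda>k. (1 / real S) *\<^sub>R (\<Sum>J\<in>{1..S}. x J 0 k))"
  define \<eta>sq where "\<eta>sq = (\<lambda>k. \<Sum>J\<in>{1..S}. (norm (x J 0 k - y))\<^sup>2)"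
  define dmax where "dmax = Max ((\<lambda>J. norm (x J 0 k - xbar k)) ` {1..S})"
  define \<gamma> where "\<gamma> = (1 / real S) * (2 * (\<alpha> k)\<^sup>2 * Mbar\<^sup>2 * Nsum * Lsum + \<alpha> k * Mbar * Nsum * dmax)"
  define C1sq where "C1sq = (\<Sum>i\<in>{1..\<Delta>}. \<Sum>J\<in>{1..S}. (\<Sum>h\<in>{1..C}. \<bar>W (i - 1) k J h\<bar> * L h)\<^sup>2)"
  define C2sq where "C2sq = 4 * (Mbar * Lsum)\<^sup>2"
  define C3sq where "C3sq = 2 * Mbar\<^sup>2 * Nsum * Lsum"
  define C4 where "C4 = Mbar * (2 * Lsum + Nsum)"
  define c where "c = (\<lambda>J i. \<Sum>h\<in>{1..C}. \<bar>W (i - 1) k J h\<bar> * L h)"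
  define dd where "dd = (\<lambda>J i. \<Sum>h\<in>{1..C}. W (i - 1) k J h *\<^sub>R g h (x J (i - 1) k))"
  have L_nn: "\<And>h. h \<in> {1..C} \<Longrightarrow> L h \<ge> 0"
    using X_ne g_bound by (meson equals0I norm_ge_zero order_trans)
  have Lsum_nn: "Lsum \<ge> 0" unfolding Lsum_def using L_nn by (intro sum_nonneg) auto
  have Nsum_nn: "Nsum \<ge> 0" unfolding Nsum_def using N_pos by (intro sum_nonneg) (auto intro: less_imp_le)
  have inXi: "\<And>J i k'. J \<in> {1..S} \<Longrightarrow> i \<in> {1..\<Delta>} \<Longrightarrow> x J i k' \<in> X"
    using x_step closest_point_in_set[OF Xc X_ne] by simp
  have inX0': "\<forall>J\<in>{1..S}. x J 0 k' \<in> X" for k'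
  proof (induction k')
    case 0 then show ?case using x_init by simp
  next
    case (Suc k')
    have "(\<Sum>J\<in>{1..S}. B k' I J *\<^sub>R x J \<Delta> k') \<in> X" if "I \<in> {1..S}" for I
      by (rule convex_sum) (use that B_rows B_nonneg inXi Delta_pos X_convex in auto)
    then show ?case using x_cons by simp
  qed
  have inX: "\<And>J i. J \<in> {1..S} \<Longrightarrow> i \<le> \<Delta> \<Longrightarrow> x J i k \<in> X"
    using inX0' inXi by (metis atLeastAtMost_iff bot_nat_0.not_eq_extremum less_one linorder_not_less)
  have c_nn: "\<And>J i. c J i \<ge> 0" unfolding c_def using L_nn by (intro sum_nonneg) auto
  have dd_bound: "\<And>J i. J \<in> {1..S} \<Longrightarrow> i \<in> {1..\<Delta>} \<Longrightarrow> norm (dd J i) \<le> c J i"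
  proof -
    fix J i assume J: "J \<in> {1..S}" and i: "i \<in> {1..\<Delta>}"
    have xi: "x J (i - 1) k \<in> X" using inX[OF J, of "i - 1"] i by auto
    show "norm (dd J i) \<le> c J i"
      unfolding dd_def c_def
      apply (rule order_trans[OF norm_sum])
      apply (rule sum_mono)
      using g_bound xi by (simp add: mult_left_mono)
  qed
  have step_sq: "\<And>J i. J \<in> {1..S} \<Longrightarrow> i \<in> {1..\<Delta>} \<Longrightarrow>
      (norm (x J i k - y))\<^sup>2 \<le> (norm (x J (i - 1) k - y))\<^sup>2 - 2 * a * (dd J i \<bullet> (x J (i - 1) k - y)) + a\<^sup>2 * (c J i)\<^sup>2"
  proof -
    fix J i assume J: "J \<in> {1..S}" and i: "i \<in> {1..\<Delta>}"
    have "norm (x J i k - y) \<le> norm ((x J (i-1) k - y) - a *\<^sub>R dd J i)"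
      using closest_point_lipschitz[OF X_convex Xc X_ne, of "x J (i-1) k - a *\<^sub>R dd J i" y]
        closest_point_self[OF y_in] x_step[OF J i, of k]
      by (simp add: dist_norm a_def dd_def algebra_simps)
    hence "(norm (x J i k - y))\<^sup>2 \<le> (norm ((x J (i-1) k - y) - a *\<^sub>R dd J i))\<^sup>2"
      by (simp add: power_mono)
    also have "\<dots> = (norm (x J (i - 1) k - y))\<^sup>2 - 2 * a * (dd J i \<bullet> (x J (i - 1) k - y)) + a\<^sup>2 * (norm (dd J i))\<^sup>2"
      by (rule norm_diff_sq_expand)
    also have "a\<^sup>2 * (norm (dd J i))\<^sup>2 \<le> a\<^sup>2 * (c J i)\<^sup>2"
      using dd_bound[OF J i] by (simp add: power_mono mult_left_mono)
    finally show "?thesis J i" by simp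
  qed
  have step_move: "\<And>J i. J \<in> {1..S} \<Longrightarrow> i \<in> {1..\<Delta>} \<Longrightarrow> norm (x J i k - x J (i - 1) k) \<le> a * c J i"
  proof -
    fix J i assume J: "J \<in> {1..S}" and i: "i \<in> {1..\<Delta>}"
    have xi: "x J (i - 1) k \<in> X" using inX[OF J, of "i - 1"] i by auto
    have "norm (x J i k - x J (i - 1) k) \<le> norm ((x J (i-1) k - a *\<^sub>R dd J i) - x J (i - 1) k)"
      using closest_point_lipschitz[OF X_convex Xc X_ne, of "x J (i-1) k - a *\<^sub>R dd J i" "x J (i - 1) k"]
        closest_point_self[OF xi] x_step[OF J i, of k]
      by (simp add: dist_norm a_def dd_def)
    also have "\<dots> = a * norm (dd J i)" using a_pos by simp
    also have "\<dots> \<le> a * c J i" using dd_bound[OF J i] a_pos by (simp add: mult_left_mono)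
    finally show "?thesis J i" .
  qed
  define T where "T = (\<lambda>J i. - 2 * a * (dd J i \<bullet> (x J (i - 1) k - y)) + a\<^sup>2 * (c J i)\<^sup>2)"
  have tele: "\<forall>n. n \<le> \<Delta> \<longrightarrow> (norm (x J n k - y))\<^sup>2 \<le> (norm (x J 0 k - y))\<^sup>2 + (\<Sum>i\<in>{1..n}. T J i)"
    if J: "J \<in> {1..S}" for J
  proof
    fix n show "n \<le> \<Delta> \<longrightarrow> (norm (x J n k - y))\<^sup>2 \<le> (norm (x J 0 k - y))\<^sup>2 + (\<Sum>i\<in>{1..n}. T J i)"
    proof (induction n)
      case 0 then show ?case by simp
    next
      case (Suc n)
      show ?case
      proof
        assume n: "Suc n \<le> \<Delta>"
        have "(norm (x J (Suc n) k - y))\<^sup>2 \<le> (norm (x J n k - y))\<^sup>2 + T J (Suc n)"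
          using step_sq[OF J, of "Suc n"] n unfolding T_def by simp
        also have "\<dots> \<le> (norm (x J 0 k - y))\<^sup>2 + (\<Sum>i\<in>{1..n}. T J i) + T J (Suc n)"
          using Suc.IH n by simp
        finally show "(norm (x J (Suc n) k - y))\<^sup>2 \<le> (norm (x J 0 k - y))\<^sup>2 + (\<Sum>i\<in>{1..Suc n}. T J i)"
          by (simp add: sum.cl_ivl_Suc)
      qed
    qed
  qed
  have drift: "\<forall>n. n \<le> \<Delta> \<longrightarrow> norm (x J n k - x J 0 k) \<le> a * (\<Sum>i\<in>{1..n}. c J i)"
    if J: "J \<in> {1..S}" for J
  proof
    fix n show "n \<le> \<Delta> \<longrightarrow> norm (x J n k - x J 0 k) \<le> a * (\<Sum>i\<in>{1..n}. c J i)"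
    proof (induction n)
      case 0 then show ?case by simp
    next
      case (Suc n)
      show ?case
      proof
        assume n: "Suc n \<le> \<Delta>"
        have "norm (x J (Suc n) k - x J 0 k) \<le> norm (x J (Suc n) k - x J n k) + norm (x J n k - x J 0 k)"
          by (rule norm_diff_triangle_ineq[THEN order_trans[rotated]]) (simp add: algebra_simps)
        also have "\<dots> \<le> a * c J (Suc n) + a * (\<Sum>i\<in>{1..n}. c J i)"
          using step_move[OF J, of "Suc n"] Suc.IH n by simp
        finally show "norm (x J (Suc n) k - x J 0 k) \<le> a * (\<Sum>i\<in>{1..Suc n}. c J i)"
          by (simp add: sum.cl_ivl_Suc algebra_simps)
      qed
    qed
  qed
  have csum: "(\<Sum>i\<in>{1..\<Delta>}. c J i) \<le> Mbar * Lsum" if J: "J \<in> {1..S}" for J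
  proof -
    have "(\<Sum>i\<in>{1..\<Delta>}. c J i) = (\<Sum>h\<in>{1..C}. (\<Sum>i\<in>{1..\<Delta>}. \<bar>W (i - 1) k J h\<bar>) * L h)"
      unfolding c_def sum_distrib_right by (rule sum.swap)
    also have "\<dots> \<le> (\<Sum>h\<in>{1..C}. Mbar * L h)"
    proof (rule sum_mono)
      fix h assume h: "h \<in> {1..C}"
      have "(\<Sum>i\<in>{1..\<Delta>}. \<bar>W (i - 1) k J h\<bar>) \<le> (\<Sum>i\<in>{1..\<Delta>}. \<Sum>J'\<in>{1..S}. \<bar>W (i - 1) k J' h\<bar>)"
        by (rule sum_mono, rule member_le_sum) (use J in auto)
      also have "\<dots> \<le> Mbar" using BUC[OF h] .
      finally show "(\<Sum>i\<in>{1..\<Delta>}. \<bar>W (i - 1) k J h\<bar>) * L h \<le> Mbar * L h"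
        using L_nn[OF h] by (simp add: mult_right_mono)
    qed
    also have "\<dots> = Mbar * Lsum" unfolding Lsum_def by (simp add: sum_distrib_left)
    finally show ?thesis .
  qed
  have ebound: "norm (x J (i - 1) k - x J 0 k) \<le> a * Mbar * Lsum"
    if J: "J \<in> {1..S}" and i: "i \<in> {1..\<Delta>}" for J i
  proof -
    have "norm (x J (i - 1) k - x J 0 k) \<le> a * (\<Sum>i\<in>{1..i-1}. c J i)"
      using drift[OF J] i by auto
    also have "(\<Sum>i\<in>{1..i-1}. c J i) \<le> (\<Sum>i\<in>{1..\<Delta>}. c J i)"
      by (rule sum_mono2) (use i c_nn in auto)
    also have "\<dots> \<le> Mbar * Lsum" by (rule csum[OF J])
    finally show ?thesis using a_pos by (simp add: mult_left_mono mult.assoc)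
  qed
  have S0: "real S > 0" using S_pos by simp
  have sumS: "(\<Sum>J\<in>{1..S}. 1 / real S) = 1" using S0 by simp
  have xbar_eq: "xbar k = (\<Sum>J\<in>{1..S}. (1 / real S) *\<^sub>R x J 0 k)"
    unfolding xbar_def by (simp add: scaleR_sum_right)
  have xbar_in: "xbar k \<in> X"
    unfolding xbar_eq by (rule convex_sum) (use sumS inX0' X_convex in auto)
  have dmax_ge: "norm (x J 0 k - xbar k) \<le> dmax" if "J \<in> {1..S}" for J
    unfolding dmax_def by (rule Max_ge) (use that in auto)
  have dmax_nn: "dmax \<ge> 0" using dmax_ge[of 1] S_pos by (meson atLeastAtMost_iff le_refl norm_ge_zero order_trans)
  define \<rho> where "\<rho> = a * Mbar * Lsum + dmax"
  have rho_nn: "\<rho> \<ge> 0" unfolding \<rho>_def using a_pos Mbar_pos Lsum_nn dmax_nn by simp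
  have ebar: "norm (x J (i - 1) k - xbar k) \<le> \<rho>"
    if J: "J \<in> {1..S}" and i: "i \<in> {1..\<Delta>}" for J i
  proof -
    have "norm (x J (i - 1) k - xbar k) \<le> norm (x J (i - 1) k - x J 0 k) + norm (x J 0 k - xbar k)"
      by (rule norm_diff_triangle_ineq[THEN order_trans[rotated]]) (simp add: algebra_simps)
    thus ?thesis using ebound[OF J i] dmax_ge[OF J] unfolding \<rho>_def by simp
  qed
  define r where "r = norm (xbar k - y)"
  have r_nn: "r \<ge> 0" unfolding r_def by simp
  have r_sq: "r\<^sup>2 \<le> \<eta>sq k / real S"
  proof -
    have "xbar k - y = (\<Sum>J\<in>{1..S}. (1 / real S) *\<^sub>R (x J 0 k - y))"
    proof -
      have "(\<Sum>J\<in>{1..S}. (1 / real S) *\<^sub>R y) = y" using S0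
        by (simp add: sum_constant_scaleR)
      thus ?thesis unfolding xbar_eq by (simp add: scaleR_right_diff_distrib sum_subtractf)
    qed
    hence "r\<^sup>2 \<le> (\<Sum>J\<in>{1..S}. (1 / real S) * (norm (x J 0 k - y))\<^sup>2)"
      unfolding r_def using sqnorm_jensen[of "{1..S}" "\<lambda>_. 1 / real S" "\<lambda>J. x J 0 k - y"] sumS S_pos
      by auto
    also have "\<dots> = \<eta>sq k / real S" unfolding \<eta>sq_def by (simp add: sum_divide_distrib)
    finally show ?thesis .
  qed
  have cons: "\<eta>sq (Suc k) \<le> (\<Sum>J\<in>{1..S}. (norm (x J \<Delta> k - y))\<^sup>2)"
  proof -
    have "(norm (x I 0 (Suc k) - y))\<^sup>2 \<le> (\<Sum>J\<in>{1..S}. B k I J * (norm (x J \<Delta> k - y))\<^sup>2)"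
      if I: "I \<in> {1..S}" for I
    proof -
      have "x I 0 (Suc k) - y = (\<Sum>J\<in>{1..S}. B k I J *\<^sub>R (x J \<Delta> k - y))"
      proof -
        have "(\<Sum>J\<in>{1..S}. B k I J *\<^sub>R y) = y" using B_rows[OF I]
          by (simp add: scaleR_sum_left[symmetric])
        thus ?thesis using x_cons[OF I, of k] by (simp add: scaleR_right_diff_distrib sum_subtractf)
      qed
      thus ?thesis using sqnorm_jensen[of "{1..S}" "B k I" "\<lambda>J. x J \<Delta> k - y"] B_rows[OF I] B_nonneg[OF I] S_pos
        by auto
    qed
    hence "\<eta>sq (Suc k) \<le> (\<Sum>I\<in>{1..S}. \<Sum>J\<in>{1..S}. B k I J * (norm (x J \<Delta> k - y))\<^sup>2)"
      unfolding \<eta>sq_def by (rule sum_mono)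
    also have "\<dots> = (\<Sum>J\<in>{1..S}. (\<Sum>I\<in>{1..S}. B k I J) * (norm (x J \<Delta> k - y))\<^sup>2)"
      unfolding sum_distrib_right by (rule sum.swap)
    also have "\<dots> = (\<Sum>J\<in>{1..S}. (norm (x J \<Delta> k - y))\<^sup>2)"
      using B_cols by simp
    finally show ?thesis .
  qed
  define q where "q = (\<lambda>h. g h (xbar k) \<bullet> (xbar k - y))"
  define K where "K = (\<lambda>h. L h + N h * r)"
  have perterm: "- (W (i - 1) k J h * (g h (x J (i - 1) k) \<bullet> (x J (i - 1) k - y)))
       \<le> - (W (i - 1) k J h * q h) + \<bar>W (i - 1) k J h\<bar> * (K h * \<rho>)"
    if J: "J \<in> {1..S}" and i: "i \<in> {1..\<Delta>}" and h: "h \<in> {1..C}" for J i h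
  proof -
    define xi where "xi = x J (i - 1) k"
    have xi_in: "xi \<in> X" unfolding xi_def using inX[OF J, of "i - 1"] i by auto
    have e: "norm (xi - xbar k) \<le> \<rho>" unfolding xi_def by (rule ebar[OF J i])
    define p where "p = g h xi \<bullet> (xi - y)"
    have pq: "p - q h = g h xi \<bullet> (xi - xbar k) + (g h xi - g h (xbar k)) \<bullet> (xbar k - y)"
      unfolding p_def q_def by (simp add: inner_diff_left inner_diff_right)
    have t1: "\<bar>g h xi \<bullet> (xi - xbar k)\<bar> \<le> L h * \<rho>"
    proof -
      have "\<bar>g h xi \<bullet> (xi - xbar k)\<bar> \<le> norm (g h xi) * norm (xi - xbar k)" by (rule Cauchy_Schwarz_ineq2)
      also have "\<dots> \<le> L h * \<rho>" using g_bound[OF h xi_in] e by (simp add: mult_mono L_nn[OF h])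
      finally show ?thesis .
    qed
    have t2: "\<bar>(g h xi - g h (xbar k)) \<bullet> (xbar k - y)\<bar> \<le> N h * r * \<rho>"
    proof -
      have "\<bar>(g h xi - g h (xbar k)) \<bullet> (xbar k - y)\<bar> \<le> norm (g h xi - g h (xbar k)) * r"
        unfolding r_def by (rule Cauchy_Schwarz_ineq2)
      also have "\<dots> \<le> (N h * \<rho>) * r"
      proof (rule mult_right_mono[OF _ r_nn])
        have "norm (g h xi - g h (xbar k)) \<le> N h * norm (xi - xbar k)" by (rule g_lip[OF h xi_in xbar_in])
        also have "\<dots> \<le> N h * \<rho>" using e N_pos[OF h] by (simp add: mult_left_mono)
        finally show "norm (g h xi - g h (xbar k)) \<le> N h * \<rho>" .
      qed
      finally show ?thesis by (simp add: algebra_simps)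
    qed
    have "\<bar>p - q h\<bar> \<le> K h * \<rho>" unfolding pq K_def using t1 t2 by (simp add: algebra_simps)
    hence "- (W (i - 1) k J h) * (p - q h) \<le> \<bar>W (i - 1) k J h\<bar> * (K h * \<rho>)"
      by (smt (verit) abs_ge_self abs_minus_cancel abs_mult abs_of_nonneg mult_left_mono abs_ge_zero)
    thus ?thesis unfolding p_def xi_def by (simp add: algebra_simps)
  qed
  have Err: "(\<Sum>i\<in>{1..\<Delta>}. \<Sum>J\<in>{1..S}. - (dd J i \<bullet> (x J (i - 1) k - y)))
      \<le> - M * (F (xbar k) - F y) + \<rho> * Mbar * (Lsum + Nsum * r)"
  proof -
    have "(\<Sum>i\<in>{1..\<Delta>}. \<Sum>J\<in>{1..S}. - (dd J i \<bullet> (x J (i - 1) k - y)))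
       = (\<Sum>i\<in>{1..\<Delta>}. \<Sum>J\<in>{1..S}. \<Sum>h\<in>{1..C}. - (W (i - 1) k J h * (g h (x J (i - 1) k) \<bullet> (x J (i - 1) k - y))))"
      unfolding dd_def by (simp add: inner_sum_left sum_negf)
    also have "\<dots> \<le> (\<Sum>i\<in>{1..\<Delta>}. \<Sum>J\<in>{1..S}. \<Sum>h\<in>{1..C}. - (W (i - 1) k J h * q h) + \<bar>W (i - 1) k J h\<bar> * (K h * \<rho>))"
      by (intro sum_mono perterm)
    also have "\<dots> = (\<Sum>i\<in>{1..\<Delta>}. \<Sum>h\<in>{1..C}. \<Sum>J\<in>{1..S}. - (W (i - 1) k J h * q h) + \<bar>W (i - 1) k J h\<bar> * (K h * \<rho>))"
      by (intro sum.cong refl sum.swap)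
    also have "\<dots> = (\<Sum>h\<in>{1..C}. \<Sum>i\<in>{1..\<Delta>}. \<Sum>J\<in>{1..S}. - (W (i - 1) k J h * q h) + \<bar>W (i - 1) k J h\<bar> * (K h * \<rho>))"
      by (rule sum.swap)
    also have "\<dots> = (\<Sum>h\<in>{1..C}. - ((\<Sum>i\<in>{1..\<Delta>}. \<Sum>J\<in>{1..S}. W (i - 1) k J h) * q h)
          + (\<Sum>i\<in>{1..\<Delta>}. \<Sum>J\<in>{1..S}. \<bar>W (i - 1) k J h\<bar>) * (K h * \<rho>))"
      by (simp add: sum.distrib sum_distrib_right sum_negf sum_subtractf)
    also have "\<dots> \<le> (\<Sum>h\<in>{1..C}. - (M * (f h (xbar k) - f h y)) + Mbar * (K h * \<rho>))"
    proof (rule sum_mono)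
      fix h assume h: "h \<in> {1..C}"
      have gi: "g h (xbar k) \<bullet> (y - xbar k) \<le> f h y - f h (xbar k)"
        by (rule grad_ineq[OF f_convex[OF h] f_deriv[OF h]])
      have "q h = - (g h (xbar k) \<bullet> (y - xbar k))" unfolding q_def by (simp add: inner_diff_right)
      hence mq: "M * q h = - (M * (g h (xbar k) \<bullet> (y - xbar k)))" by simp
      have m: "M * (g h (xbar k) \<bullet> (y - xbar k)) \<le> M * (f h y - f h (xbar k))"
        using mult_left_mono[OF gi less_imp_le[OF M_pos]] .
      have "M * (f h y - f h (xbar k)) = - (M * (f h (xbar k) - f h y))" by (simp add: algebra_simps)
      hence qq: "- (M * q h) \<le> - (M * (f h (xbar k) - f h y))" using mq m by linarith
      have Kn: "K h * \<rho> \<ge> 0" unfolding K_def using L_nn[OF h] N_pos[OF h] r_nn rho_nn by simp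
      have "(\<Sum>i\<in>{1..\<Delta>}. \<Sum>J\<in>{1..S}. \<bar>W (i - 1) k J h\<bar>) * (K h * \<rho>) \<le> Mbar * (K h * \<rho>)"
        using BUC[OF h] Kn by (rule mult_right_mono)
      thus "- ((\<Sum>i\<in>{1..\<Delta>}. \<Sum>J\<in>{1..S}. W (i - 1) k J h) * q h)
          + (\<Sum>i\<in>{1..\<Delta>}. \<Sum>J\<in>{1..S}. \<bar>W (i - 1) k J h\<bar>) * (K h * \<rho>)
          \<le> - (M * (f h (xbar k) - f h y)) + Mbar * (K h * \<rho>)"
        using SLC[OF h] qq by simp
    qed
    also have "\<dots> = - M * (F (xbar k) - F y) + \<rho> * Mbar * (Lsum + Nsum * r)"
      unfolding F_def Lsum_def Nsum_def K_def
      by (simp add: sum.distrib sum_distrib_left sum_distrib_right sum_subtractf sum_negf algebra_simps)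
    finally show ?thesis .
  qed
  have main: "\<eta>sq (Suc k) \<le> \<eta>sq k + 2 * a * (\<Sum>i\<in>{1..\<Delta>}. \<Sum>J\<in>{1..S}. - (dd J i \<bullet> (x J (i - 1) k - y))) + a\<^sup>2 * C1sq"
  proof -
    have "\<eta>sq (Suc k) \<le> (\<Sum>J\<in>{1..S}. (norm (x J \<Delta> k - y))\<^sup>2)" by (rule cons)
    also have "\<dots> \<le> (\<Sum>J\<in>{1..S}. (norm (x J 0 k - y))\<^sup>2 + (\<Sum>i\<in>{1..\<Delta>}. T J i))"
      by (rule sum_mono) (use tele in auto)
    also have "\<dots> = \<eta>sq k + (\<Sum>i\<in>{1..\<Delta>}. \<Sum>J\<in>{1..S}. T J i)"
      unfolding \<eta>sq_def by (simp add: sum.distrib) (rule sum.swap)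
    also have "(\<Sum>i\<in>{1..\<Delta>}. \<Sum>J\<in>{1..S}. T J i) = 2 * a * (\<Sum>i\<in>{1..\<Delta>}. \<Sum>J\<in>{1..S}. - (dd J i \<bullet> (x J (i - 1) k - y))) + a\<^sup>2 * C1sq"
      unfolding T_def C1sq_def c_def by (simp add: sum.distrib sum_distrib_left sum_negf sum_subtractf)
    finally show ?thesis by simp
  qed
  have eta_nn: "\<eta>sq k \<ge> 0" unfolding \<eta>sq_def by (intro sum_nonneg) auto
  define P where "P = a * \<rho> * Mbar * Nsum"
  have P_nn: "P \<ge> 0" unfolding P_def using a_pos rho_nn Mbar_pos Nsum_nn by simp
  have i1: "2 * P * r \<le> P + P * r\<^sup>2"
  proof -
    have "P * (r - 1)\<^sup>2 \<ge> 0" using P_nn by simp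
    thus ?thesis by (simp add: power2_eq_square algebra_simps)
  qed
  have i2: "P * r\<^sup>2 \<le> P * (\<eta>sq k / real S)" using r_sq P_nn by (rule mult_left_mono)
  have i3: "P * (\<eta>sq k / real S) \<le> \<gamma> * \<eta>sq k"
  proof -
    have "\<gamma> - P / real S = (a\<^sup>2 * Mbar\<^sup>2 * Nsum * Lsum) / real S"
      unfolding \<gamma>_def P_def \<rho>_def a_def using S0 by (simp add: field_simps power2_eq_square)
    moreover have "(a\<^sup>2 * Mbar\<^sup>2 * Nsum * Lsum) / real S \<ge> 0" using Nsum_nn Lsum_nn S0 by simp
    ultimately have "P / real S \<le> \<gamma>" by linarith
    hence "P / real S * \<eta>sq k \<le> \<gamma> * \<eta>sq k" using eta_nn by (rule mult_right_mono)
    thus ?thesis by simp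
  qed
  have i4: "2 * a * \<rho> * Mbar * Lsum + P \<le> a\<^sup>2 * (C2sq + C3sq) + a * C4 * dmax"
  proof -
    have "a\<^sup>2 * (C2sq + C3sq) + a * C4 * dmax - (2 * a * \<rho> * Mbar * Lsum + P)
        = 2 * a\<^sup>2 * Mbar\<^sup>2 * Lsum\<^sup>2 + a\<^sup>2 * Mbar\<^sup>2 * Nsum * Lsum"
      unfolding C2sq_def C3sq_def C4_def P_def \<rho>_def by (simp add: power2_eq_square algebra_simps)
    moreover have "2 * a\<^sup>2 * Mbar\<^sup>2 * Lsum\<^sup>2 + a\<^sup>2 * Mbar\<^sup>2 * Nsum * Lsum \<ge> 0"
      using Nsum_nn Lsum_nn by simp
    ultimately show ?thesis by linarith
  qed
  have ex: "2 * a * (\<rho> * Mbar * (Lsum + Nsum * r)) = 2 * a * \<rho> * Mbar * Lsum + 2 * P * r"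
    unfolding P_def by (simp add: algebra_simps)
  have final: "\<eta>sq (Suc k) \<le> (1 + \<gamma>) * \<eta>sq k - 2 * \<alpha> k * M * (F (xbar k) - F y)
          + (\<alpha> k)\<^sup>2 * (C1sq + C2sq + C3sq) + \<alpha> k * C4 * dmax"
  proof -
    have "2 * a * (\<Sum>i\<in>{1..\<Delta>}. \<Sum>J\<in>{1..S}. - (dd J i \<bullet> (x J (i - 1) k - y)))
        \<le> 2 * a * (- M * (F (xbar k) - F y) + \<rho> * Mbar * (Lsum + Nsum * r))"
      using Err a_pos by simp
    also have "\<dots> = - 2 * a * M * (F (xbar k) - F y) + 2 * a * (\<rho> * Mbar * (Lsum + Nsum * r))"
      by (simp add: algebra_simps)
    finally have "2 * a * (\<Sum>i\<in>{1..\<Delta>}. \<Sum>J\<in>{1..S}. - (dd J i \<bullet> (x J (i - 1) k - y)))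
        \<le> - 2 * a * M * (F (xbar k) - F y) + \<gamma> * \<eta>sq k + a\<^sup>2 * (C2sq + C3sq) + a * C4 * dmax"
      using ex i1 i2 i3 i4 by linarith
    thus ?thesis using main unfolding a_def by (simp add: algebra_simps)
  qed
  show ?thesis unfolding Let_def
    by (rule final[unfolded \<gamma>_def C4_def C3sq_def C2sq_def C1sq_def dmax_def \<eta>sq_def xbar_def F_def Nsum_def Lsum_def])
qed


end
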